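(* Let $A\in\mathbb{R}^{n\times n}$ be nonsingular, $B\in\mathbb{R}^{n\times p}$, $C\in\mathbb{R}^{q\times n}$, and let $X_0=O$. For $k=0,1,2,\dots$ suppose that $A-X_kBB^T$ is nonsingular and that $X_{k+1}$ is the approximate solution computed by EKSM (in the sense described in the context) of the Newton–Kleinman Lyapunov equation $$(A-X_kBB^T)X+X(A-X_kBB^T)^T=-X_kBB^TX_k-C^TC ,$$ i.e. $X_{k+1}=W_{k+1}Y^{(k+1)}W_{k+1}^T$, where the columns of $W_{k+1}$ form an orthonormal basis of $\mathbf{EK}^\square_{m_{k+1}}(A-X_kBB^T,[C^T,X_kB])$ for some $m_{k+1}\ge1$, and $Y^{(k+1)}$ is a square matrix; write $X_{k+1}=S_{k+1}S_{k+1}^T$ when $Y^{(k+1)}$ is symmetric positive semidefinite. Then for every $k\ge0$, $$\mathrm{Range}(X_{k+1})\subseteq \mathbf{EK}^\square_{\bar m_{k+1}}(A,C^T)\quad(\text{equivalently }\mathrm{Range}(S_{k+1})\subseteq \mathbf{EK}^\square_{\bar m_{k+1}}(A,C^T))$$ for some integer $\bar m_{k+1}$ with $\bar m_{k+1}\le \sum_{j=1}^{k+1}m_j+2$.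
   Context: For a nonsingular $M\in\mathbb{R}^{n\times n}$ and $G\in\mathbb{R}^{n\times s}$, the block extended Krylov subspace is $\mathbf{EK}^\square_m(M,G)=\mathrm{Range}([G,M^{-1}G,MG,M^{-2}G,\dots,M^{m-1}G,M^{-m}G])$. "Solving the Lyapunov equation $MX+XM^T+GG^T=0$ by EKSM" means computing an approximate solution of the form $VYV^T$, where the columns of $V$ form an orthonormal basis of $\mathbf{EK}^\square_m(M,G)$ for some $m$ and $Y$ is a small square matrix (e.g. obtained by a Galerkin condition). *)

theory Defs
  imports "HOL-Analysis.Analysis"
begin

fun mpow :: "real^'n^'n \<Rightarrow> nat \<Rightarrow> real^'n^'n" where
  "mpow M 0 = mat 1"
| "mpow M (Suc k) = M ** mpow M k"

definition mpow_int :: "real^'n^'n \<Rightarrow> int \<Rightarrow> real^'n^'n" where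
  "mpow_int M j = (if 0 \<le> j then mpow M (nat j) else mpow (matrix_inv M) (nat (- j)))"

definition mrange :: "real^'s^'n \<Rightarrow> (real^'n) set" where
  "mrange G = {G *v x | x. True}"

text \<open>Block extended Krylov subspace
  EK_m(M,G) = Range([G, M^{-1}G, MG, M^{-2}G, ..., M^{m-1}G, M^{-m}G]),
  i.e. the span of the ranges of M^j G for j = -m, ..., m-1.\<close>
definition EK :: "nat \<Rightarrow> real^'n^'n \<Rightarrow> real^'s^'n \<Rightarrow> (real^'n) set" where
  "EK m M G = span (\<Union>j\<in>{- int m..int m - 1}. mrange (mpow_int M j ** G))"

definition hcat :: "real^'a^'n \<Rightarrow> real^'b^'n \<Rightarrow> real^('a + 'b)^'n" where
  "hcat G1 G2 = (\<chi> i j. case j of Inl a \<Rightarrow> G1 $ i $ a | Inr b \<Rightarrow> G2 $ i $ b)"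

text \<open>W Y W^T, where W has the vectors of the list ws as columns and Y is r x r
  (r = length ws), given as a function on indices.\<close>
definition WYWt :: "(real^'n) list \<Rightarrow> (nat \<Rightarrow> nat \<Rightarrow> real) \<Rightarrow> real^'n^'n" where
  "WYWt ws Y = (\<chi> a b. \<Sum>i<length ws. \<Sum>j<length ws. (ws ! i) $ a * Y i j * (ws ! j) $ b)"

definition orthonormal_basis_of :: "(real^'n) list \<Rightarrow> (real^'n) set \<Rightarrow> bool" where
  "orthonormal_basis_of ws V \<longleftrightarrow>
     (\<forall>i<length ws. \<forall>j<length ws. (ws ! i) \<bullet> (ws ! j) = (if i = j then 1 else 0))
     \<and> span (set ws) = V"

end

theory Submission
  imports Defs
begin

lemma minv:
  fixes M :: "real^'n^'n"
  assumes "invertible M"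
  shows "M ** matrix_inv M = mat 1 \<and> matrix_inv M ** M = mat 1"
  using assms unfolding invertible_def matrix_inv_def by (rule someI_ex)

lemma mpow_int_succ:
  fixes M :: "real^'n^'n"
  assumes "invertible M"
  shows "M ** mpow_int M j = mpow_int M (j+1)"
proof (cases "0 \<le> j")
  case True
  then have "nat (j+1) = Suc (nat j)" by simp
  then show ?thesis using True by (simp add: mpow_int_def)
next
  case False
  define d where "d = nat (-j) - 1"
  have d: "nat (-j) = Suc d" using False unfolding d_def by simp
  show ?thesis
  proof (cases "j = -1")
    case True
    then show ?thesis using minv[OF assms] by (simp add: mpow_int_def)
  next
    case F2: False
    have "nat (-(j+1)) = d" using d by simp
    then show ?thesis using False F2 d minv[OF assms]
      by (simp add: mpow_int_def matrix_mul_assoc)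
  qed
qed

lemma mpow_int_pred:
  fixes M :: "real^'n^'n"
  assumes "invertible M"
  shows "matrix_inv M ** mpow_int M j = mpow_int M (j-1)"
proof -
  have "matrix_inv M ** mpow_int M j = matrix_inv M ** (M ** mpow_int M (j-1))"
    using mpow_int_succ[OF assms, of "j-1"] by simp
  also have "\<dots> = mpow_int M (j-1)" using minv[OF assms] by (simp add: matrix_mul_assoc)
  finally show ?thesis .
qed

lemma EK_mono:
  assumes "r \<le> r'" shows "EK r M G \<subseteq> EK r' M G"
  unfolding EK_def by (rule span_mono) (use assms in force)

lemma EK_gen:
  assumes "j \<in> {- int m..int m - 1}" shows "(mpow_int M j ** G) *v x \<in> EK m M G"
  unfolding EK_def mrange_def by (rule span_base) (use assms in blast)

lemma lin_span_image:
  fixes f :: "real^'n \<Rightarrow> real^'n"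
  assumes "linear f" "\<And>v. v \<in> S \<Longrightarrow> f v \<in> T" "subspace T"
  shows "v \<in> span S \<Longrightarrow> f v \<in> T"
proof -
  assume "v \<in> span S"
  then have "f v \<in> f ` span S" by blast
  also have "f ` span S = span (f ` S)" by (rule span_linear_image[OF assms(1), symmetric])
  also have "\<dots> \<subseteq> T" using assms(2,3) by (intro span_minimal) auto
  finally show ?thesis .
qed

lemma EK_A:
  fixes A :: "real^'n^'n" and G :: "real^'s^'n"
  assumes "invertible A" "v \<in> EK r A G"
  shows "A *v v \<in> EK (r+1) A G \<and> matrix_inv A *v v \<in> EK (r+1) A G"
proof -
  have sub: "subspace (EK (r+1) A G)" unfolding EK_def by simp
  have lin1: "linear ((*v) A)" "linear ((*v) (matrix_inv A))" by (auto intro: matrix_vector_mul_linear)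
  have hv: "v \<in> span (\<Union>j\<in>{- int r..int r - 1}. mrange (mpow_int A j ** G))"
    using assms(2) unfolding EK_def .
  have "A *v v \<in> EK (r+1) A G"
  proof (rule lin_span_image[OF lin1(1) _ sub hv])
    fix w assume "w \<in> (\<Union>j\<in>{- int r..int r - 1}. mrange (mpow_int A j ** G))"
    then obtain j x where j: "j \<in> {- int r..int r - 1}" and w: "w = (mpow_int A j ** G) *v x"
      unfolding mrange_def by blast
    have "A *v w = (mpow_int A (j+1) ** G) *v x"
      using mpow_int_succ[OF assms(1), of j] by (simp add: w matrix_vector_mul_assoc matrix_mul_assoc)
    also have "\<dots> \<in> EK (r+1) A G" by (rule EK_gen) (use j in auto)
    finally show "A *v w \<in> EK (r+1) A G" .
  qed
  moreover have "matrix_inv A *v v \<in> EK (r+1) A G"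
  proof (rule lin_span_image[OF lin1(2) _ sub hv])
    fix w assume "w \<in> (\<Union>j\<in>{- int r..int r - 1}. mrange (mpow_int A j ** G))"
    then obtain j x where j: "j \<in> {- int r..int r - 1}" and w: "w = (mpow_int A j ** G) *v x"
      unfolding mrange_def by blast
    have "matrix_inv A *v w = (mpow_int A (j-1) ** G) *v x"
      using mpow_int_pred[OF assms(1), of j] by (simp add: w matrix_vector_mul_assoc matrix_mul_assoc)
    also have "\<dots> \<in> EK (r+1) A G" by (rule EK_gen) (use j in auto)
    finally show "matrix_inv A *v w \<in> EK (r+1) A G" .
  qed
  ultimately show ?thesis by blast
qed

lemma WYWt_mv:
  "WYWt ws Y *v x = (\<Sum>i<length ws. (\<Sum>j<length ws. Y i j * (ws!j \<bullet> x)) *\<^sub>R ws!i)"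
proof -
  have "(WYWt ws Y *v x) $ a = (\<Sum>i<length ws. (\<Sum>j<length ws. Y i j * (ws!j \<bullet> x)) *\<^sub>R ws!i) $ a" for a
  proof -
    have "(WYWt ws Y *v x) $ a = (\<Sum>b\<in>UNIV. \<Sum>i<length ws. \<Sum>j<length ws. ws!i$a * Y i j * ws!j$b * x$b)"
      by (simp add: WYWt_def matrix_vector_mult_def sum_distrib_right)
    also have "\<dots> = (\<Sum>i<length ws. \<Sum>j<length ws. \<Sum>b\<in>UNIV. ws!i$a * Y i j * ws!j$b * x$b)"
      by (rule trans[OF sum.swap], rule sum.cong[OF refl], rule sum.swap)
    also have "\<dots> = (\<Sum>i<length ws. (\<Sum>j<length ws. Y i j * (ws!j \<bullet> x)) *\<^sub>R ws!i) $ a"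
      by (simp add: inner_vec_def sum_component sum_distrib_left sum_distrib_right mult_ac)
    finally show ?thesis .
  qed
  then show ?thesis by (simp add: vec_eq_iff)
qed

lemma WYWt_range: "mrange (WYWt ws Y) \<subseteq> span (set ws)"
proof
  fix v assume "v \<in> mrange (WYWt ws Y)"
  then obtain x where v: "v = WYWt ws Y *v x" unfolding mrange_def by blast
  show "v \<in> span (set ws)" unfolding v WYWt_mv
    by (intro span_sum span_mul span_base) simp
qed

lemma hcat_mv:
  "hcat G1 G2 *v x = G1 *v (\<chi> a. x $ Inl a) + G2 *v (\<chi> b. x $ Inr b)"
proof -
  have "(hcat G1 G2 *v x) $ i = (G1 *v (\<chi> a. x $ Inl a) + G2 *v (\<chi> b. x $ Inr b)) $ i" for i
  proof -
    have "(hcat G1 G2 *v x) $ i = (\<Sum>j\<in>UNIV <+> UNIV. hcat G1 G2 $ i $ j * x $ j)"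
      by (simp only: matrix_vector_mult_def vec_lambda_beta UNIV_Plus_UNIV)
    also have "\<dots> = (G1 *v (\<chi> a. x $ Inl a) + G2 *v (\<chi> b. x $ Inr b)) $ i"
      by (subst sum.Plus) (simp_all add: hcat_def matrix_vector_mult_def)
    finally show ?thesis .
  qed
  then show ?thesis by (simp add: vec_eq_iff)
qed


lemma NK_step:
  fixes A :: "real^'n^'n" and B :: "real^'p^'n" and Ct :: "real^'q^'n" and Xk :: "real^'n^'n"
  assumes iA: "invertible A" and iK: "invertible (A - Xk ** B ** transpose B)"
    and XR: "mrange Xk \<subseteq> EK s A Ct" and s1: "s \<ge> 1"
  shows "EK m (A - Xk ** B ** transpose B) (hcat Ct (Xk ** B)) \<subseteq> EK (s+m) A Ct"
proof -
  define K where "K = A - Xk ** B ** transpose B"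
  define G where "G = hcat Ct (Xk ** B)"
  have subsp: "subspace (EK r A Ct)" for r unfolding EK_def by simp
  have Xin: "Xk *v y \<in> EK r A Ct" if "s \<le> r" for y r
  proof -
    have "Xk *v y \<in> mrange Xk" unfolding mrange_def by blast
    then show ?thesis using XR EK_mono[OF that] by blast
  qed
  have L: "K *v v \<in> EK (r+1) A Ct \<and> matrix_inv K *v v \<in> EK (r+1) A Ct"
    if r: "s \<le> r" and v: "v \<in> EK r A Ct" for r v
  proof
    have "K *v v = A *v v - Xk *v (B *v (transpose B *v v))"
      unfolding K_def by (simp only: matrix_vector_mult_diff_rdistrib flip: matrix_vector_mul_assoc)
    moreover have "A *v v \<in> EK (r+1) A Ct" using EK_A[OF iA v] by blast
    moreover have "Xk *v (B *v (transpose B *v v)) \<in> EK (r+1) A Ct" using Xin r by simp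
    ultimately show "K *v v \<in> EK (r+1) A Ct" using subspace_diff[OF subsp] by simp
  next
    define y where "y = matrix_inv K *v v"
    have "K *v y = v" unfolding y_def using minv[OF iK[folded K_def]]
      by (simp add: matrix_vector_mul_assoc)
    moreover have "K *v y = A *v y - Xk *v (B *v (transpose B *v y))"
      unfolding K_def by (simp only: matrix_vector_mult_diff_rdistrib flip: matrix_vector_mul_assoc)
    ultimately have "A *v y = v + Xk *v (B *v (transpose B *v y))"
      by (simp add: algebra_simps)
    moreover have "Xk *v (B *v (transpose B *v y)) \<in> EK r A Ct" using Xin r by simp
    ultimately have "A *v y \<in> EK r A Ct" using v subspace_add[OF subsp] by simp
    then have "matrix_inv A *v (A *v y) \<in> EK (r+1) A Ct" using EK_A[OF iA] by blast
    moreover have "matrix_inv A *v (A *v y) = y" using minv[OF iA] by (simp add: matrix_vector_mul_assoc)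
    ultimately show "matrix_inv K *v v \<in> EK (r+1) A Ct" unfolding y_def by simp
  qed
  have base: "G *v x \<in> EK s A Ct" for x
  proof -
    have "Ct *v z = (mpow_int A 0 ** Ct) *v z" for z by (simp add: mpow_int_def)
    also have "\<dots> z \<in> EK 1 A Ct" for z by (rule EK_gen) simp
    finally have "Ct *v z \<in> EK s A Ct" for z using EK_mono[OF s1] by blast
    moreover have "(Xk ** B) *v z \<in> EK s A Ct" for z
      using Xin[of s "B *v z"] by (simp add: matrix_vector_mul_assoc)
    ultimately show ?thesis unfolding G_def hcat_mv using subspace_add[OF subsp] by blast
  qed
  have pw: "(mpow K d ** G) *v x \<in> EK (s+d) A Ct \<and> (mpow (matrix_inv K) d ** G) *v x \<in> EK (s+d) A Ct" for d x
  proof (induction d)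
    case 0 then show ?case using base by simp
  next
    case (Suc d)
    have "(mpow K (Suc d) ** G) *v x = K *v ((mpow K d ** G) *v x)"
      by (simp add: matrix_vector_mul_assoc matrix_mul_assoc)
    moreover have "(mpow (matrix_inv K) (Suc d) ** G) *v x = matrix_inv K *v ((mpow (matrix_inv K) d ** G) *v x)"
      by (simp add: matrix_vector_mul_assoc matrix_mul_assoc)
    ultimately show ?case using L[of "s+d"] Suc by simp
  qed
  have "EK m K G \<subseteq> EK (s+m) A Ct"
    unfolding EK_def[of m K G]
  proof (rule span_minimal[OF _ subsp])
    show "(\<Union>j\<in>{- int m..int m - 1}. mrange (mpow_int K j ** G)) \<subseteq> EK (s + m) A Ct"
    proof
      fix w assume "w \<in> (\<Union>j\<in>{- int m..int m - 1}. mrange (mpow_int K j ** G))"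
      then obtain j x where j: "j \<in> {- int m..int m - 1}" and w: "w = (mpow_int K j ** G) *v x"
        unfolding mrange_def by blast
      show "w \<in> EK (s+m) A Ct"
      proof (cases "0 \<le> j")
        case True
        then have "w = (mpow K (nat j) ** G) *v x" "nat j \<le> m" using j w by (auto simp: mpow_int_def)
        then show ?thesis using pw[of "nat j" x] EK_mono[of "s + nat j" "s+m"] by auto
      next
        case False
        then have "w = (mpow (matrix_inv K) (nat (-j)) ** G) *v x" "nat (-j) \<le> m" using j w by (auto simp: mpow_int_def)
        then show ?thesis using pw[of "nat (-j)" x] EK_mono[of "s + nat (-j)" "s+m"] by auto
      qed
    qed
  qed
  then show ?thesis unfolding K_def G_def .
qed

theorem theorem1:
  fixes A :: "real^'n^'n" and B :: "real^'p^'n" and C :: "real^'n^'q"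
    and X :: "nat \<Rightarrow> real^'n^'n"
    and W :: "nat \<Rightarrow> (real^'n) list"
    and Y :: "nat \<Rightarrow> nat \<Rightarrow> nat \<Rightarrow> real"
    and m :: "nat \<Rightarrow> nat"
  assumes "invertible A"
    and "X 0 = 0"
    and "\<And>k. invertible (A - X k ** B ** transpose B)"
    and "\<And>k. m (Suc k) \<ge> 1"
    and "\<And>k. orthonormal_basis_of (W (Suc k))
               (EK (m (Suc k)) (A - X k ** B ** transpose B) (hcat (transpose C) (X k ** B)))"
    and "\<And>k. X (Suc k) = WYWt (W (Suc k)) (Y (Suc k))"
  shows "\<forall>k. \<exists>mb::nat. mb \<le> (\<Sum>j=1..k+1. m j) + 2 \<and>
           mrange (X (k+1)) \<subseteq> EK mb A (transpose C)"
proof -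
  define s where "s k = 1 + (\<Sum>j=1..k. m j)" for k
  have R: "mrange (X k) \<subseteq> EK (s k) A (transpose C)" for k
  proof (induction k)
    case 0
    have "mrange (X 0) = {0}" using assms(2) unfolding mrange_def by auto
    then show ?case unfolding EK_def by (simp add: span_zero)
  next
    case (Suc k)
    have "mrange (X (Suc k)) \<subseteq> span (set (W (Suc k)))" using assms(6)[of k] WYWt_range by simp
    also have "\<dots> = EK (m (Suc k)) (A - X k ** B ** transpose B) (hcat (transpose C) (X k ** B))"
      using assms(5)[of k] unfolding orthonormal_basis_of_def by blast
    also have "\<dots> \<subseteq> EK (s k + m (Suc k)) A (transpose C)"
      by (rule NK_step[OF assms(1) assms(3) Suc]) (simp add: s_def)
    also have "s k + m (Suc k) = s (Suc k)" unfolding s_def by simp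
    finally show ?case .
  qed
  show ?thesis
  proof
    fix k show "\<exists>mb::nat. mb \<le> (\<Sum>j=1..k+1. m j) + 2 \<and> mrange (X (k+1)) \<subseteq> EK mb A (transpose C)"
    proof (rule exI[of _ "s (k+1)"])
      show "s (k+1) \<le> (\<Sum>j=1..k+1. m j) + 2 \<and> mrange (X (k+1)) \<subseteq> EK (s (k+1)) A (transpose C)"
        using R[of "k+1"] unfolding s_def by simp
    qed
  qed
qed

end
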